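(* Let $Q=[u_1,\dots,u_n]\subset\mathbb{S}^2$ with $n\ge 7$ be a spherical polygon not contained in any closed hemisphere, without self-intersections and antipodal intersections, with exactly two essential vertices $u_i,u_j$, and let $u_k,u_l$ be nonessential vertices such that $\{u_i,u_j,u_k,u_l\}$ is not contained in any closed hemisphere. Then the spherical convex hull of the set of nonessential vertices of $Q$ is contained in the union of the spherical triangles $\triangle(\overline u_i,\overline u_j,\overline u_k)$ and $\triangle(\overline u_i,\overline u_j,\overline u_l)$. In particular, this convex hull does not contain $\overline u_i$ nor $\overline u_j$.
   Context: A spherical polygon has edges the minimal great-circle arcs between consecutive vertices; no three vertices lie on a common great circle. A set is balanced if not contained in any closed hemisphere; for balanced $Q$, $u_m$ is essential if the vertex set minus $u_m$ is not balanced, nonessential otherwise. Self-intersection: two non-adjacent edges intersect; antipodal intersection: non-adjacent edges $e,f$ with $e\cap(-f)\neq\emptyset$. $\overline u=-u$. *)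

theory Defs
  imports "HOL-Analysis.Analysis"
begin

type_synonym pt = "real ^ 3"

definition closed_hemisphere :: "pt \<Rightarrow> pt set" where
  "closed_hemisphere v = {x. norm x = 1 \<and> inner v x \<ge> 0}"

definition in_closed_hemisphere :: "pt set \<Rightarrow> bool" where
  "in_closed_hemisphere S \<longleftrightarrow> (\<exists>v. v \<noteq> 0 \<and> S \<subseteq> closed_hemisphere v)"

definition balanced :: "pt set \<Rightarrow> bool" where
  "balanced S \<longleftrightarrow> \<not> in_closed_hemisphere S"

definition sconv :: "pt set \<Rightarrow> pt set" where
  "sconv S = {x. norm x = 1 \<and> x \<in> cone hull (convex hull S)}"

definition stri :: "pt \<Rightarrow> pt \<Rightarrow> pt \<Rightarrow> pt set" where
  "stri a b c = sconv {a, b, c}"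

text \<open>Minimal great-circle arc between two non-antipodal unit vectors.\<close>
definition arc :: "pt \<Rightarrow> pt \<Rightarrow> pt set" where
  "arc a b = {x. norm x = 1 \<and> (\<exists>s t. s \<ge> 0 \<and> t \<ge> 0 \<and> x = s *\<^sub>R a + t *\<^sub>R b)}"

text \<open>Polygon with n vertices u 0, ..., u (n-1), indices taken cyclically.\<close>
definition vertices :: "nat \<Rightarrow> (nat \<Rightarrow> pt) \<Rightarrow> pt set" where
  "vertices n u = u ` {..<n}"

definition edge :: "nat \<Rightarrow> (nat \<Rightarrow> pt) \<Rightarrow> nat \<Rightarrow> pt set" where
  "edge n u m = arc (u m) (u (Suc m mod n))"

definition adjacent_edges :: "nat \<Rightarrow> nat \<Rightarrow> nat \<Rightarrow> bool" where
  "adjacent_edges n m m' \<longleftrightarrow> m' = Suc m mod n \<or> m = Suc m' mod n"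

definition nonadjacent_edges :: "nat \<Rightarrow> nat \<Rightarrow> nat \<Rightarrow> bool" where
  "nonadjacent_edges n m m' \<longleftrightarrow> m < n \<and> m' < n \<and> m \<noteq> m' \<and> \<not> adjacent_edges n m m'"

text \<open>Spherical polygon: unit vertices, no three on a common great circle.\<close>
definition spherical_polygon :: "nat \<Rightarrow> (nat \<Rightarrow> pt) \<Rightarrow> bool" where
  "spherical_polygon n u \<longleftrightarrow> n \<ge> 3 \<and> (\<forall>m<n. norm (u m) = 1) \<and>
     (\<forall>a<n. \<forall>b<n. \<forall>c<n. a \<noteq> b \<and> a \<noteq> c \<and> b \<noteq> c \<longrightarrow>
        \<not> (\<exists>v. v \<noteq> 0 \<and> inner v (u a) = 0 \<and> inner v (u b) = 0 \<and> inner v (u c) = 0))"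

definition self_intersecting :: "nat \<Rightarrow> (nat \<Rightarrow> pt) \<Rightarrow> bool" where
  "self_intersecting n u \<longleftrightarrow>
     (\<exists>m m'. nonadjacent_edges n m m' \<and> edge n u m \<inter> edge n u m' \<noteq> {})"

definition antipodal_intersecting :: "nat \<Rightarrow> (nat \<Rightarrow> pt) \<Rightarrow> bool" where
  "antipodal_intersecting n u \<longleftrightarrow>
     (\<exists>m m'. nonadjacent_edges n m m' \<and> edge n u m \<inter> uminus ` edge n u m' \<noteq> {})"

definition essential :: "nat \<Rightarrow> (nat \<Rightarrow> pt) \<Rightarrow> nat \<Rightarrow> bool" where
  "essential n u m \<longleftrightarrow> \<not> balanced (vertices n u - {u m})"

definition nonessential_vertices :: "nat \<Rightarrow> (nat \<Rightarrow> pt) \<Rightarrow> pt set" where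
  "nonessential_vertices n u = {u m | m. m < n \<and> \<not> essential n u m}"

end

theory Submission
  imports Defs
begin

lemma orth2:
  fixes x y :: "real^3"
  obtains w where "w \<noteq> 0" "inner w x = 0" "inner w y = 0"
proof -
  have "dim {x,y} \<le> card {x,y}" by (rule dim_le_card) (auto intro: span_base)
  also have "\<dots> \<le> 2" by (simp add: card_insert_le_m1)
  finally have "dim {x,y} < DIM(real^3)" by simp
  then obtain w where "w \<noteq> 0" "\<And>z. z \<in> span {x,y} \<Longrightarrow> orthogonal w z"
    using orthogonal_to_subspace_exists by blast
  then show ?thesis using that by (auto simp: orthogonal_def span_base)
qed

lemma span3:
  fixes a b c v :: "real^3"
  assumes "\<And>w. w \<noteq> 0 \<Longrightarrow> inner w a = 0 \<Longrightarrow> inner w b = 0 \<Longrightarrow> inner w c = 0 \<Longrightarrow> False"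
  shows "\<exists>x y z. v = x *\<^sub>R a + y *\<^sub>R b + z *\<^sub>R c"
proof -
  have "dim {a,b,c} \<le> card {a,b,c}" by (rule dim_le_card) (auto intro: span_base)
  also have "\<dots> \<le> 3" by (simp add: card_insert_le_m1)
  finally have le: "dim {a,b,c} \<le> DIM(real^3)" by simp
  have "\<not> dim {a,b,c} < DIM(real^3)"
  proof
    assume "dim {a,b,c} < DIM(real^3)"
    then obtain w where "w \<noteq> 0" "\<And>z. z \<in> span {a,b,c} \<Longrightarrow> orthogonal w z"
      using orthogonal_to_subspace_exists by blast
    then show False using assms[of w] by (simp add: orthogonal_def span_base)
  qed
  with le have "dim {a,b,c} = DIM(real^3)" by linarith
  then have "span {a,b,c} = UNIV" using dim_eq_full by blast
  then have "v \<in> span {a,b,c}" by simp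
  then obtain x where "v - x *\<^sub>R a \<in> span {b,c}" by (auto simp: span_insert)
  then obtain y where "v - x *\<^sub>R a - y *\<^sub>R b \<in> span {c}" by (auto simp: span_insert)
  then obtain z where "v - x *\<^sub>R a - y *\<^sub>R b = z *\<^sub>R c" by (auto simp: span_singleton)
  then have "v = x *\<^sub>R a + y *\<^sub>R b + z *\<^sub>R c" by (simp add: algebra_simps)
  then show ?thesis by blast
qed

lemma gp_orth:
  assumes "spherical_polygon n u" "a < n" "b < n" "c < n" "a \<noteq> b" "a \<noteq> c" "b \<noteq> c"
    "w \<noteq> 0" "inner w (u a) = 0" "inner w (u b) = 0" "inner w (u c) = 0"
  shows False
  using assms unfolding spherical_polygon_def by blast

lemma gp_indep:
  assumes "spherical_polygon n u" "a < n" "b < n" "c < n" "a \<noteq> b" "a \<noteq> c" "b \<noteq> c"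
    "x *\<^sub>R u a + y *\<^sub>R u b + z *\<^sub>R u c = 0"
  shows "x = 0"
proof (rule ccontr)
  assume x: "x \<noteq> 0"
  obtain w where w: "w \<noteq> 0" "inner w (u b) = 0" "inner w (u c) = 0" using orth2 by blast
  have "inner w (x *\<^sub>R u a + y *\<^sub>R u b + z *\<^sub>R u c) = 0" using assms(8) by simp
  then have "x * inner w (u a) = 0" using w by (simp add: inner_add_right)
  then have "inner w (u a) = 0" using x by simp
  then show False using gp_orth[OF assms(1-7) w(1) _ w(2,3)] by blast
qed

lemma third:
  fixes n a b :: nat
  assumes "n \<ge> 3" "a < n" "b < n"
  obtains e where "e < n" "e \<noteq> a" "e \<noteq> b"
proof -
  have "\<exists>e. e < n \<and> e \<noteq> a \<and> e \<noteq> b"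
  proof (cases "0 \<noteq> a \<and> 0 \<noteq> b")
    case True then show ?thesis using assms by (intro exI[of _ 0]) auto
  next
    case False
    show ?thesis
    proof (cases "1 \<noteq> a \<and> 1 \<noteq> b")
      case True then show ?thesis using assms by (intro exI[of _ 1]) auto
    next
      case False2: False
      show ?thesis using assms False False2 by (intro exI[of _ 2]) auto
    qed
  qed
  then show ?thesis using that by blast
qed

lemma gp_inj:
  assumes "spherical_polygon n u" "a < n" "b < n" "a \<noteq> b"
  shows "u a \<noteq> u b"
proof
  assume eq: "u a = u b"
  have n3: "n \<ge> 3" using assms(1) by (simp add: spherical_polygon_def)
  obtain e where e: "e < n" "e \<noteq> a" "e \<noteq> b" using third[OF n3 assms(2,3)] by blast
  have "1 *\<^sub>R u a + (-1) *\<^sub>R u b + 0 *\<^sub>R u e = 0" using eq by simp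
  from gp_indep[OF assms(1,2,3) e(1) assms(4) e(2)[symmetric] e(3)[symmetric] this] show False by simp
qed

lemma gp_span:
  assumes "spherical_polygon n u" "a < n" "b < n" "c < n" "a \<noteq> b" "a \<noteq> c" "b \<noteq> c"
  shows "\<exists>x y z. v = x *\<^sub>R u a + y *\<^sub>R u b + z *\<^sub>R u c"
  by (rule span3) (use gp_orth[OF assms] in blast)

lemma key:
  assumes sp: "spherical_polygon n u" and I: "I \<subseteq> {..<n}" and w: "w \<noteq> 0"
    and hw: "\<forall>m\<in>I. inner w (u m) \<ge> 0" and c: "\<forall>m\<in>I. c m \<ge> 0"
    and s: "(\<Sum>m\<in>I. c m *\<^sub>R u m) = 0" and a: "a \<in> I"
  shows "c a = 0"
proof (rule ccontr)
  assume ca: "c a \<noteq> 0"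
  have fin: "finite I" using I finite_subset by blast
  have n3: "n \<ge> 3" using sp by (simp add: spherical_polygon_def)
  have "(\<Sum>m\<in>I. c m * inner w (u m)) = inner w (\<Sum>m\<in>I. c m *\<^sub>R u m)"
    by (simp add: inner_sum_right)
  also have "\<dots> = 0" using s by simp
  finally have "\<forall>m\<in>I. c m * inner w (u m) = 0"
    using sum_nonneg_eq_0_iff[OF fin, of "\<lambda>m. c m * inner w (u m)"] c hw by simp
  then have orth: "\<And>m. m \<in> I \<Longrightarrow> c m \<noteq> 0 \<Longrightarrow> inner w (u m) = 0" by (metis mult_eq_0_iff)
  have an: "a < n" using a I by auto
  show False
  proof (cases "\<exists>b\<in>I. b \<noteq> a \<and> c b \<noteq> 0")
    case True
    then obtain b where b: "b \<in> I" "b \<noteq> a" "c b \<noteq> 0" by blast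
    have bn: "b < n" using b I by auto
    show False
    proof (cases "\<exists>d\<in>I. d \<noteq> a \<and> d \<noteq> b \<and> c d \<noteq> 0")
      case True
      then obtain d where d: "d \<in> I" "d \<noteq> a" "d \<noteq> b" "c d \<noteq> 0" by blast
      have dn: "d < n" using d I by auto
      show False using gp_orth[OF sp an bn dn b(2)[symmetric] d(2)[symmetric] d(3)[symmetric] w
          orth[OF a ca] orth[OF b(1,3)] orth[OF d(1,4)]] .
    next
      case False
      then have "(\<Sum>m\<in>I. c m *\<^sub>R u m) = (\<Sum>m\<in>{a,b}. c m *\<^sub>R u m)"
        using a b by (intro sum.mono_neutral_right[OF fin]) auto
      then have eq: "c a *\<^sub>R u a + c b *\<^sub>R u b + 0 *\<^sub>R u a = 0" using s b by simp
      obtain e where e: "e < n" "e \<noteq> a" "e \<noteq> b" using third[OF n3 an bn] by blast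
      have "c a *\<^sub>R u a + c b *\<^sub>R u b + 0 *\<^sub>R u e = 0" using eq by simp
      from gp_indep[OF sp an bn e(1) b(2)[symmetric] e(2)[symmetric] e(3)[symmetric] this] ca
      show False by simp
    qed
  next
    case False
    then have "(\<Sum>m\<in>I. c m *\<^sub>R u m) = (\<Sum>m\<in>{a}. c m *\<^sub>R u m)"
      using a by (intro sum.mono_neutral_right[OF fin]) auto
    then have "c a *\<^sub>R u a = 0" using s by simp
    then have "u a = 0" using ca by simp
    then show False using sp an unfolding spherical_polygon_def by (metis norm_zero zero_neq_one)
  qed
qed

lemma bad:
  assumes sp: "spherical_polygon n u" and e: "e < n"
    and v: "v \<noteq> 0" "\<forall>m<n. m \<noteq> e \<longrightarrow> inner v (u m) \<ge> 0"
    and NI: "NI \<subseteq> {..<n} - {e}" and nu: "\<forall>m\<in>NI. \<nu> m \<ge> 0"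
    and idx: "f < n" "k < n" "l < n" "f \<noteq> e" "k \<noteq> e" "l \<noteq> e"
    and P: "P \<ge> 0" and Q: "Q > 0" and R: "R \<ge> 0"
    and s: "(\<Sum>m\<in>NI. \<nu> m *\<^sub>R u m) + P *\<^sub>R u f + Q *\<^sub>R u k + R *\<^sub>R u l = 0"
  shows False
proof -
  define I where "I = {..<n} - {e}"
  define c where "c m = (if m \<in> NI then \<nu> m else 0) + (if m = f then P else 0)
      + (if m = k then Q else 0) + (if m = l then R else 0)" for m
  have fin: "finite I" by (simp add: I_def)
  have fq: "(\<lambda>m. c m *\<^sub>R u m) = (\<lambda>m. (if m \<in> NI then \<nu> m *\<^sub>R u m else 0)
     + (if m = f then P *\<^sub>R u m else 0) + (if m = k then Q *\<^sub>R u m else 0)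
     + (if m = l then R *\<^sub>R u m else 0))"
    by (auto simp: c_def fun_eq_iff scaleR_add_left)
  have "I \<inter> NI = NI" using NI by (auto simp: I_def)
  moreover have "f \<in> I" "k \<in> I" "l \<in> I" using idx by (auto simp: I_def)
  ultimately have "(\<Sum>m\<in>I. c m *\<^sub>R u m) =
     (\<Sum>m\<in>NI. \<nu> m *\<^sub>R u m) + P *\<^sub>R u f + Q *\<^sub>R u k + R *\<^sub>R u l"
  proof -
    have "(\<Sum>m\<in>I. if m \<in> NI then \<nu> m *\<^sub>R u m else 0) = (\<Sum>m\<in>I \<inter> NI. \<nu> m *\<^sub>R u m)"
      by (rule sum.inter_restrict[OF fin, symmetric])
    then have "(\<Sum>m\<in>I. if m \<in> NI then \<nu> m *\<^sub>R u m else 0) = (\<Sum>m\<in>NI. \<nu> m *\<^sub>R u m)"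
      using \<open>I \<inter> NI = NI\<close> by simp
    then show ?thesis unfolding fq using fin \<open>f \<in> I\<close> \<open>k \<in> I\<close> \<open>l \<in> I\<close>
      by (simp add: sum.distrib)
  qed
  with s have s': "(\<Sum>m\<in>I. c m *\<^sub>R u m) = 0" by simp
  have "c k = 0"
    by (rule key[OF sp _ v(1) _ _ s']) (use v(2) nu P Q R idx in \<open>auto simp: I_def c_def\<close>)
  moreover have "c k > 0"
  proof -
    have h1: "(if k \<in> NI then \<nu> k else 0) \<ge> 0" using nu by auto
    have h2: "(if k = f then P else 0) \<ge> 0" using P by auto
    have h3: "(if k = l then R else 0) \<ge> 0" using R by auto
    have h4: "(if k = k then Q else 0) = Q" by simp
    show ?thesis unfolding c_def h4 using h1 h2 h3 Q by linarith
  qed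
  ultimately show False by simp
qed

lemma neg_coef:
  assumes sp: "spherical_polygon n u" "a < n" "b < n" "c < n" "a \<noteq> b" "a \<noteq> c" "b \<noteq> c"
    and d: "d < n" and eq: "u d = p *\<^sub>R u a + q *\<^sub>R u b + r *\<^sub>R u c"
    and bal: "balanced {u a, u b, u c, u d}"
  shows "p < 0"
proof (rule ccontr)
  assume p: "\<not> p < 0"
  obtain w where w: "w \<noteq> 0" "inner w (u b) = 0" "inner w (u c) = 0" using orth2 by blast
  have wa: "inner w (u a) \<noteq> 0" using gp_orth[OF sp w(1) _ w(2,3)] by blast
  define w' where "w' = (if inner w (u a) > 0 then w else - w)"
  have w': "w' \<noteq> 0" "inner w' (u a) > 0" "inner w' (u b) = 0" "inner w' (u c) = 0"
    using w wa by (auto simp: w'_def)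
  have "inner w' (u d) = p * inner w' (u a)" using w' by (simp add: eq inner_add_right)
  also have "\<dots> \<ge> 0" using p w' by simp
  finally have "inner w' (u d) \<ge> 0" .
  moreover have "\<forall>m<n. norm (u m) = 1" using sp by (simp add: spherical_polygon_def)
  ultimately have "{u a, u b, u c, u d} \<subseteq> closed_hemisphere w'"
    using w' sp d by (auto simp: closed_hemisphere_def)
  then show False using bal w' by (auto simp: balanced_def in_closed_hemisphere_def)
qed

lemma in_stri:
  fixes p1 p2 p3 x :: "real^3"
  assumes "norm x = 1" "x = a *\<^sub>R p1 + b *\<^sub>R p2 + c *\<^sub>R p3" "a \<ge> 0" "b \<ge> 0" "c \<ge> 0"
  shows "x \<in> stri p1 p2 p3"
proof -
  define s where "s = a + b + c"
  have "s \<noteq> 0"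
  proof
    assume "s = 0"
    then have "a = 0" "b = 0" "c = 0" using assms(3-5) unfolding s_def by linarith+
    then show False using assms(1,2) by simp
  qed
  then have s: "s > 0" using assms(3-5) unfolding s_def by linarith
  have sum1: "a/s + b/s + c/s = 1"
  proof -
    have "a/s + b/s + c/s = (a+b+c)/s" by (simp add: add_divide_distrib)
    also have "\<dots> = 1" using s by (simp add: s_def)
    finally show ?thesis .
  qed
  have nn: "a/s \<ge> 0" "b/s \<ge> 0" "c/s \<ge> 0" using s assms(3-5) by simp_all
  have cv: "(a/s) *\<^sub>R p1 + (b/s) *\<^sub>R p2 + (c/s) *\<^sub>R p3 \<in> convex hull {p1,p2,p3}"
    unfolding convex_hull_3 using sum1 nn by blast
  have e1: "s * (a/s) = a" "s * (b/s) = b" "s * (c/s) = c" using s by simp_all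
  have xs: "x = s *\<^sub>R ((a/s) *\<^sub>R p1 + (b/s) *\<^sub>R p2 + (c/s) *\<^sub>R p3)"
    unfolding scaleR_add_right scaleR_scaleR e1 by (rule assms(2))
  have "x \<in> cone hull (convex hull {p1,p2,p3})"
    unfolding cone_hull_expl using s cv xs by (intro CollectI exI conjI) (auto simp del: scaleR_add_right)
  then show ?thesis using assms(1) by (simp add: stri_def sconv_def)
qed

lemma sconv_extr:
  fixes u :: "nat \<Rightarrow> real^3"
  assumes "y \<in> sconv (u ` NI)" "finite NI" "inj_on u NI"
  shows "\<exists>\<nu>. (\<forall>m\<in>NI. \<nu> m \<ge> 0) \<and> y = (\<Sum>m\<in>NI. \<nu> m *\<^sub>R u m)"
proof -
  obtain c0 x where cx: "c0 \<ge> 0" "x \<in> convex hull (u ` NI)" "y = c0 *\<^sub>R x"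
    using assms(1) unfolding sconv_def cone_hull_expl by blast
  obtain \<mu> where mu: "\<forall>z\<in>u ` NI. 0 \<le> \<mu> z" "(\<Sum>z\<in>u ` NI. \<mu> z *\<^sub>R z) = x"
    using cx(2) convex_hull_finite[of "u ` NI"] assms(2) by auto
  have "x = (\<Sum>m\<in>NI. \<mu> (u m) *\<^sub>R u m)"
    using mu(2) sum.reindex[OF assms(3), of "\<lambda>z. \<mu> z *\<^sub>R z"] by simp
  then have "y = (\<Sum>m\<in>NI. (c0 * \<mu> (u m)) *\<^sub>R u m)"
    using cx(3) by (simp add: scaleR_sum_right)
  moreover have "\<forall>m\<in>NI. c0 * \<mu> (u m) \<ge> 0" using cx(1) mu(1) by simp
  ultimately show ?thesis by (intro exI[of _ "\<lambda>m. c0 * \<mu> (u m)"] conjI) simp_all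
qed

theorem lemma8:
  fixes n :: nat and u :: "nat \<Rightarrow> real ^ 3" and i j k l :: nat
  assumes "spherical_polygon n u" and "n \<ge> 7"
    and "balanced (vertices n u)"
    and "\<not> self_intersecting n u" and "\<not> antipodal_intersecting n u"
    and "i < n" and "j < n" and "i \<noteq> j"
    and "\<forall>m<n. essential n u m \<longleftrightarrow> m = i \<or> m = j"
    and "k < n" and "l < n" and "\<not> essential n u k" and "\<not> essential n u l"
    and "balanced {u i, u j, u k, u l}"
  shows "sconv (nonessential_vertices n u)
           \<subseteq> stri (- u i) (- u j) (- u k) \<union> stri (- u i) (- u j) (- u l)
         \<and> - u i \<notin> sconv (nonessential_vertices n u)
         \<and> - u j \<notin> sconv (nonessential_vertices n u)"
proof -
  note sp = assms(1)
  have ess: "\<And>m. m < n \<Longrightarrow> essential n u m \<longleftrightarrow> m = i \<or> m = j" using assms(9) by blast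
  have ei: "essential n u i" and ej: "essential n u j" using ess assms(6,7) by auto
  have kl: "k \<noteq> i" "k \<noteq> j" "l \<noteq> i" "l \<noteq> j" using ei ej assms(12,13) by auto
  define NI where "NI = {m. m < n \<and> \<not> essential n u m}"
  have NIeq: "NI = {..<n} - {i,j}" using ess by (auto simp: NI_def)
  have Neq: "nonessential_vertices n u = u ` NI" by (auto simp: nonessential_vertices_def NI_def)
  have finNI: "finite NI" by (simp add: NIeq)
  have injNI: "inj_on u NI" using gp_inj[OF sp] by (auto simp: inj_on_def NIeq)
  have nrm: "\<And>m. m < n \<Longrightarrow> norm (u m) = 1" using sp by (simp add: spherical_polygon_def)
  have hemi: "\<exists>v. v \<noteq> 0 \<and> (\<forall>m<n. m \<noteq> e \<longrightarrow> inner v (u m) \<ge> 0)"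
    if e: "e < n" "essential n u e" for e
  proof -
    obtain v where v: "v \<noteq> 0" "vertices n u - {u e} \<subseteq> closed_hemisphere v"
      using e(2) by (auto simp: essential_def balanced_def in_closed_hemisphere_def)
    have "\<forall>m<n. m \<noteq> e \<longrightarrow> inner v (u m) \<ge> 0"
    proof (intro allI impI)
      fix m assume m: "m < n" "m \<noteq> e"
      then have "u m \<in> vertices n u - {u e}" using gp_inj[OF sp m(1) e(1) m(2)]
        by (auto simp: vertices_def)
      then show "inner v (u m) \<ge> 0" using v(2) by (auto simp: closed_hemisphere_def)
    qed
    then show ?thesis using v(1) by blast
  qed
  obtain vi where vi: "vi \<noteq> 0" "\<forall>m<n. m \<noteq> i \<longrightarrow> inner vi (u m) \<ge> 0"
    using hemi[OF assms(6) ei] by blast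
  obtain vj where vj: "vj \<noteq> 0" "\<forall>m<n. m \<noteq> j \<longrightarrow> inner vj (u m) \<ge> 0"
    using hemi[OF assms(7) ej] by blast
  have part2: "- u e \<notin> sconv (u ` NI)"
    if ef: "e < n" "f < n" "e \<noteq> f" "NI \<subseteq> {..<n} - {e,f}" "v \<noteq> 0"
      "\<forall>m<n. m \<noteq> f \<longrightarrow> inner v (u m) \<ge> 0" for e f v
  proof
    assume "- u e \<in> sconv (u ` NI)"
    then obtain \<nu> where nu: "\<forall>m\<in>NI. \<nu> m \<ge> 0" "- u e = (\<Sum>m\<in>NI. \<nu> m *\<^sub>R u m)"
      using sconv_extr[OF _ finNI injNI] by blast
    have "(\<Sum>m\<in>NI. \<nu> m *\<^sub>R u m) + 0 *\<^sub>R u e + 1 *\<^sub>R u e + 0 *\<^sub>R u e = 0"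
      using nu(2)[symmetric] by simp
    from bad[OF sp ef(2) ef(5,6) _ nu(1) ef(1) ef(1) ef(1) ef(3) ef(3) ef(3) _ _ _ this]
    show False using ef(4) by auto
  qed
  have p2i: "- u i \<notin> sconv (u ` NI)"
    by (rule part2[OF assms(6,7,8) _ vj]) (auto simp: NIeq)
  have p2j: "- u j \<notin> sconv (u ` NI)"
    by (rule part2[OF assms(7,6) assms(8)[symmetric] _ vi]) (auto simp: NIeq)
  have ijk: "i \<noteq> k" "j \<noteq> k" using kl by auto
  obtain p q r where eq: "u l = p *\<^sub>R u i + q *\<^sub>R u j + r *\<^sub>R u k"
    using gp_span[OF sp assms(6,7,10,8) ijk] by blast
  have p: "p < 0" using neg_coef[OF sp assms(6,7,10,8) ijk assms(11) eq assms(14)] .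
  have q: "q < 0"
  proof -
    have e2: "u l = q *\<^sub>R u j + p *\<^sub>R u i + r *\<^sub>R u k" using eq by (simp add: algebra_simps)
    have b2: "balanced {u j, u i, u k, u l}" using assms(14) by (simp add: insert_commute)
    show ?thesis using neg_coef[OF sp assms(7,6,10) assms(8)[symmetric] ijk(2,1) assms(11) e2 b2] .
  qed
  have r: "r < 0"
  proof -
    have e2: "u l = r *\<^sub>R u k + p *\<^sub>R u i + q *\<^sub>R u j" using eq by (simp add: algebra_simps)
    have b2: "balanced {u k, u i, u j, u l}" using assms(14) by (simp add: insert_commute)
    show ?thesis using neg_coef[OF sp assms(10,6,7) ijk(1)[symmetric] ijk(2)[symmetric] assms(8) assms(11) e2 b2] .
  qed
  define \<alpha> where "\<alpha> = - p"
  define \<beta> where "\<beta> = - q"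
  define \<gamma> where "\<gamma> = - r"
  have abc: "\<alpha> > 0" "\<beta> > 0" "\<gamma> > 0" using p q r by (auto simp: \<alpha>_def \<beta>_def \<gamma>_def)
  have rel: "\<alpha> *\<^sub>R u i + \<beta> *\<^sub>R u j + \<gamma> *\<^sub>R u k + u l = 0"
    using eq by (simp add: \<alpha>_def \<beta>_def \<gamma>_def algebra_simps)
  have part1: "y \<in> stri (- u i) (- u j) (- u k) \<union> stri (- u i) (- u j) (- u l)"
    if y: "y \<in> sconv (u ` NI)" for y
  proof -
    have ny: "norm y = 1" using y by (simp add: sconv_def)
    obtain \<nu> where nu: "\<forall>m\<in>NI. \<nu> m \<ge> 0" "y = (\<Sum>m\<in>NI. \<nu> m *\<^sub>R u m)"
      using sconv_extr[OF y finNI injNI] by blast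
    obtain A B C where ABC: "- y = A *\<^sub>R u i + B *\<^sub>R u j + C *\<^sub>R u k"
      using gp_span[OF sp assms(6,7,10,8) ijk] by blast
    define t where "t = max 0 (max (-A/\<alpha>) (max (-B/\<beta>) (-C/\<gamma>)))"
    define la where "la = A + t * \<alpha>"
    define lb where "lb = B + t * \<beta>"
    define lc where "lc = C + t * \<gamma>"
    have t0: "t \<ge> 0" by (simp add: t_def)
    have "-A/\<alpha> \<le> t" by (simp add: t_def)
    then have "- A \<le> t * \<alpha>" using abc by (simp add: field_simps)
    then have la0: "la \<ge> 0" by (simp add: la_def)
    have "-B/\<beta> \<le> t" by (simp add: t_def)
    then have "- B \<le> t * \<beta>" using abc by (simp add: field_simps)
    then have lb0: "lb \<ge> 0" by (simp add: lb_def)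
    have "-C/\<gamma> \<le> t" by (simp add: t_def)
    then have "- C \<le> t * \<gamma>" using abc by (simp add: field_simps)
    then have lc0: "lc \<ge> 0" by (simp add: lc_def)
    have "la *\<^sub>R (- u i) + lb *\<^sub>R (- u j) + lc *\<^sub>R (- u k) + t *\<^sub>R (- u l)
        = - (A *\<^sub>R u i + B *\<^sub>R u j + C *\<^sub>R u k)
          - t *\<^sub>R (\<alpha> *\<^sub>R u i + \<beta> *\<^sub>R u j + \<gamma> *\<^sub>R u k + u l)"
      by (simp add: la_def lb_def lc_def algebra_simps)
    also have "\<dots> = y" using rel ABC by (metis diff_zero minus_minus scaleR_zero_right)
    finally have yrep: "y = la *\<^sub>R (- u i) + lb *\<^sub>R (- u j) + lc *\<^sub>R (- u k) + t *\<^sub>R (- u l)" by simp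
    have tc: "t = 0 \<or> t = -A/\<alpha> \<or> t = -B/\<beta> \<or> t = -C/\<gamma>" by (auto simp: t_def max_def)
    show ?thesis
    proof (cases "t = 0")
      case True
      then have "y = la *\<^sub>R (- u i) + lb *\<^sub>R (- u j) + lc *\<^sub>R (- u k)" using yrep by simp
      then show ?thesis using in_stri[OF ny _ la0 lb0 lc0] by blast
    next
      case tn: False
      show ?thesis
      proof (cases "lc = 0")
        case True
        then have "y = la *\<^sub>R (- u i) + lb *\<^sub>R (- u j) + t *\<^sub>R (- u l)" using yrep by simp
        then show ?thesis using in_stri[OF ny _ la0 lb0 t0] by blast
      next
        case lcn: False
        have tpos: "t > 0" using t0 tn by simp
        have lcpos: "lc > 0" using lc0 lcn by simp
        have "t \<noteq> -C/\<gamma>" using lcn abc by (auto simp: lc_def)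
        then have "t = -A/\<alpha> \<or> t = -B/\<beta>" using tc tn by blast
        then have "la = 0 \<or> lb = 0" using abc by (auto simp: la_def lb_def)
        then show ?thesis
        proof
          assume "la = 0"
          then have h: "(\<Sum>m\<in>NI. \<nu> m *\<^sub>R u m) = - (lb *\<^sub>R u j + (lc *\<^sub>R u k + t *\<^sub>R u l))"
            using yrep nu(2) by (simp add: add.assoc)
          then have "(\<Sum>m\<in>NI. \<nu> m *\<^sub>R u m) + lb *\<^sub>R u j + lc *\<^sub>R u k + t *\<^sub>R u l = 0"
            by (simp only: h add.assoc left_minus)
          from bad[OF sp assms(6) vi _ nu(1) assms(7,10,11) assms(8)[symmetric] kl(1,3) lb0 lcpos t0 this]
          show ?thesis using NIeq by auto
        next
          assume "lb = 0"
          then have h: "(\<Sum>m\<in>NI. \<nu> m *\<^sub>R u m) = - (la *\<^sub>R u i + (lc *\<^sub>R u k + t *\<^sub>R u l))"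
            using yrep nu(2) by (simp add: add.assoc)
          then have "(\<Sum>m\<in>NI. \<nu> m *\<^sub>R u m) + la *\<^sub>R u i + lc *\<^sub>R u k + t *\<^sub>R u l = 0"
            by (simp only: h add.assoc left_minus)
          from bad[OF sp assms(7) vj _ nu(1) assms(6,10,11) assms(8) kl(2,4) la0 lcpos t0 this]
          show ?thesis using NIeq by auto
        qed
      qed
    qed
  qed
  show ?thesis unfolding Neq using part1 p2i p2j by blast
qed

end
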